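(* Let $\mathrm{cleaf}_2:\mathbb{R}\to\mathbb{R}$ be the leaf function of basis $2$. For every real $l$ with $c:=\mathrm{cleaf}_2(l)\neq-1$, $$\Bigl(\mathrm{cleaf}_2\Bigl(\frac l2\Bigr)\Bigr)^2=\frac{-1+c+\sqrt2\sqrt{1+c^2}}{1+c}.$$
   Context: For a natural number $n$, the leaf function $\mathrm{cleaf}_n:\mathbb{R}\to\mathbb{R}$ is the solution of $\frac{\mathrm{d}^2r}{\mathrm{d}l^2}=-n\,r^{2n-1}$ with $r(0)=1$, $r'(0)=0$. *)

theory Defs
  imports "HOL-Analysis.Analysis"
begin

definition cleaf :: "nat \<Rightarrow> real \<Rightarrow> real" where
  "cleaf n = (THE r. \<exists>r'. r 0 = 1 \<and> r' 0 = 0 \<and>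
      (\<forall>l. (r has_real_derivative r' l) (at l)) \<and>
      (\<forall>l. (r' has_real_derivative (- real n * r l ^ (2 * n - 1))) (at l)))"

end

theory Submission
  imports Defs
begin



definition sol :: "(real \<Rightarrow> real) \<Rightarrow> (real \<Rightarrow> real) \<Rightarrow> bool" where
  "sol r r' \<longleftrightarrow> r 0 = 1 \<and> r' 0 = 0 \<and> (\<forall>l. (r has_real_derivative r' l) (at l)) \<and>
      (\<forall>l. (r' has_real_derivative (-2 * r l ^ 3)) (at l))"

lemma sol_energy:
  assumes "sol r r'" shows "r' l ^ 2 + r l ^ 4 = 1"
proof -
  have d: "\<And>x. ((\<lambda>x. r' x ^ 2 + r x ^ 4) has_real_derivative 0) (at x)"
  proof -
    fix x
    have d1: "\<And>x. (r has_real_derivative r' x) (at x)" and d2: "\<And>x. (r' has_real_derivative (-2 * r x ^ 3)) (at x)"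
      using assms unfolding sol_def by auto
    show "?thesis x"
      by (auto intro!: derivative_eq_intros d1 d2 simp: algebra_simps)
  qed
  have "r' l ^ 2 + r l ^ 4 = r' 0 ^ 2 + r 0 ^ 4"
    using DERIV_isconst_all[of "\<lambda>x. r' x ^ 2 + r x ^ 4"] d by blast
  then show ?thesis using assms by (simp add: sol_def)
qed

lemma sol_bound:
  assumes "sol r r'" shows "\<bar>r l\<bar> \<le> 1"
proof -
  have "r' l ^ 2 \<ge> 0" by simp
  then have "r l ^ 4 \<le> 1" using sol_energy[OF assms, of l] by linarith
  hence "\<bar>r l\<bar> ^ Suc 3 \<le> 1 ^ Suc 3" by simp
  thus ?thesis by (rule power_le_imp_le_base) auto
qed

lemma cube_diff_bound:
  fixes a b :: real assumes "\<bar>a\<bar> \<le> 1" "\<bar>b\<bar> \<le> 1"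
  shows "\<bar>a^2 + a*b + b^2\<bar> \<le> 3"
proof -
  have "a^2 \<le> 1" "b^2 \<le> 1" using assms by (simp_all add: abs_square_le_1)
  moreover have "\<bar>a*b\<bar> \<le> 1" using assms by (simp add: abs_mult mult_le_one)
  moreover have "a^2 \<ge> 0" "b^2 \<ge> 0" by simp_all
  ultimately show ?thesis unfolding abs_le_iff abs_le_iff[of "a*b"] by linarith
qed


lemma sq3_nonneg: fixes a b :: real shows "0 \<le> a^2 + a*b + b^2"
proof -
  have "a^2 + a*b + b^2 = ((a+b)^2 + a^2 + b^2) / 2" by (simp add: power2_eq_square field_simps)
  also have "\<dots> \<ge> 0" by simp
  finally show ?thesis .
qed

lemma aux5: "0 \<le> (m::real) \<Longrightarrow> m \<le> 3 \<Longrightarrow> \<bar>1 - 2 * m\<bar> \<le> 5"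
  by auto

lemma sol_unique:
  assumes r: "sol r r'" and q: "sol q q'" shows "r = q"
proof
  fix t
  define D where "D x = (r x - q x)^2 + (r' x - q' x)^2" for x
  define D' where "D' x = 2 * (r x - q x) * (r' x - q' x) * (1 - 2 * (r x^2 + r x * q x + q x^2))" for x
  have dD: "(D has_real_derivative D' x) (at x)" for x
  proof -
    have d1: "\<And>x. (r has_real_derivative r' x) (at x)" and d2: "\<And>x. (r' has_real_derivative (-2 * r x ^ 3)) (at x)"
      and d3: "\<And>x. (q has_real_derivative q' x) (at x)" and d4: "\<And>x. (q' has_real_derivative (-2 * q x ^ 3)) (at x)"
      using r q unfolding sol_def by auto
    show ?thesis unfolding D_def
      by (auto intro!: derivative_eq_intros d1 d2 d3 d4 simp add: D'_def algebra_simps power2_eq_square power3_eq_cube)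
  qed
  have D0: "D 0 = 0" using r q by (simp add: D_def sol_def)
  have Dnn: "D x \<ge> 0" for x by (simp add: D_def)
  have bnd: "\<bar>D' x\<bar> \<le> 5 * D x" for x
  proof -
    let ?a = "r x - q x" and ?b = "r' x - q' x" and ?m = "r x^2 + r x * q x + q x^2"
    have m: "\<bar>?m\<bar> \<le> 3" using cube_diff_bound sol_bound r q by blast
    have ab: "\<bar>2 * ?a * ?b\<bar> \<le> ?a^2 + ?b^2"
    proof -
      have "0 \<le> (\<bar>?a\<bar> - \<bar>?b\<bar>)^2" by (rule zero_le_power2)
      also have "\<dots> = ?a^2 + ?b^2 - 2 * \<bar>?a\<bar> * \<bar>?b\<bar>" by (simp only: power2_diff power2_abs)
      moreover have "\<bar>2 * ?a * ?b\<bar> = 2 * \<bar>?a\<bar> * \<bar>?b\<bar>" by (simp only: abs_mult abs_numeral)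
      ultimately show ?thesis by linarith
    qed
    have m2: "2 * ?m = (r x + q x)^2 + (r x)^2 + (q x)^2" by (simp add: power2_eq_square algebra_simps)
    have "0 \<le> (r x + q x)^2" "0 \<le> (r x)^2" "0 \<le> (q x)^2" by simp_all
    have "0 \<le> ?m" by (rule sq3_nonneg)
    then have m5: "\<bar>1 - 2 * ?m\<bar> \<le> 5" using abs_le_D1[OF m] by (rule aux5)
    have "\<bar>D' x\<bar> = \<bar>2 * ?a * ?b\<bar> * \<bar>1 - 2 * ?m\<bar>" unfolding D'_def by (simp add: abs_mult)
    also have "\<dots> \<le> (?a^2 + ?b^2) * 5"
      using ab m5 by (rule mult_mono) auto
    finally show ?thesis by (simp add: D_def)
  qed
  have "D t = 0"
  proof (cases "t \<ge> 0")
    case True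
    have "(\<lambda>x. D x * exp (-5*x)) 0 \<ge> (\<lambda>x. D x * exp (-5*x)) t"
    proof (rule DERIV_nonpos_imp_nonincreasing[of 0 t "\<lambda>x. D x * exp (-5*x)", OF True])
      fix x
      have "((\<lambda>x. D x * exp (-5*x)) has_real_derivative (D' x * exp (-5*x) + D x * (exp (-5*x) * (-5)))) (at x)"
        by (auto intro!: derivative_eq_intros dD)
      moreover have "D' x * exp (-5*x) + D x * (exp (-5*x) * (-5)) \<le> 0"
      proof -
        have "D' x - 5 * D x \<le> 0" using abs_le_D1[OF bnd[of x]] by linarith
        then have "exp (-5*x) * (D' x - 5 * D x) \<le> 0" by (intro mult_nonneg_nonpos) auto
        then show ?thesis by (simp add: algebra_simps)
      qed
      ultimately show "\<exists>y. ((\<lambda>x. D x * exp (-5*x)) has_real_derivative y) (at x) \<and> y \<le> 0" by blast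
    qed
    then have "D t * exp (-5*t) \<le> 0" using D0 by simp
    then show ?thesis using Dnn[of t] by (simp add: mult_le_0_iff)
  next
    case False
    have "(\<lambda>x. D x * exp (5*x)) t \<le> (\<lambda>x. D x * exp (5*x)) 0"
    proof (rule DERIV_nonneg_imp_nondecreasing[of t 0 "\<lambda>x. D x * exp (5*x)"])
      show "t \<le> 0" using False by simp
      fix x
      have "((\<lambda>x. D x * exp (5*x)) has_real_derivative (D' x * exp (5*x) + D x * (exp (5*x) * 5))) (at x)"
        by (auto intro!: derivative_eq_intros dD)
      moreover have "D' x * exp (5*x) + D x * (exp (5*x) * 5) \<ge> 0"
      proof -
        have "D' x + 5 * D x \<ge> 0" using abs_le_D2[OF bnd[of x]] by linarith
        then have "exp (5*x) * (D' x + 5 * D x) \<ge> 0" by (intro mult_nonneg_nonneg) auto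
        then show ?thesis by (simp add: algebra_simps)
      qed
      ultimately show "\<exists>y. ((\<lambda>x. D x * exp (5*x)) has_real_derivative y) (at x) \<and> y \<ge> 0" by blast
    qed
    then have "D t * exp (5*t) \<le> 0" using D0 by simp
    then show ?thesis using Dnn[of t] by (simp add: mult_le_0_iff)
  qed
  then show "r t = q t" unfolding D_def by simp
qed



definition gg :: "real \<Rightarrow> real" where "gg t = 1 / sqrt (1 + (cos t)^2)"
definition Phi :: "real \<Rightarrow> real" where "Phi x = integral {0..x} gg - integral {x..0} gg"

lemma gg_cont: "continuous_on S gg"
proof -
  have "\<And>t. sqrt (1 + (cos t)^2) > 0" by (intro real_sqrt_gt_zero add_pos_nonneg) auto
  then have "\<And>t. sqrt (1 + (cos t)^2) \<noteq> 0" by (metis less_irrefl)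
  then show ?thesis unfolding gg_def by (intro continuous_intros) auto
qed

lemma gg_bounds: "gg t > 0" "gg t \<ge> 1 / sqrt 2"
proof -
  have p: "sqrt (1 + (cos t)^2) > 0" by (intro real_sqrt_gt_zero add_pos_nonneg) auto
  show "gg t > 0" using p by (simp add: gg_def)
  have "(cos t)^2 \<le> 1" by (simp add: abs_square_le_1)
  hence "sqrt (1 + (cos t)^2) \<le> sqrt 2" by simp
  then show "gg t \<ge> 1 / sqrt 2" unfolding gg_def using p
    by (intro divide_left_mono) auto
qed

lemma Phi_deriv: "(Phi has_real_derivative gg t) (at t)"
proof -
  define a where "a = - \<bar>t\<bar> - 1"
  define b where "b = \<bar>t\<bar> + 1"
  have ab: "a < t" "t < b" "a < 0" "0 < b" unfolding a_def b_def by auto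
  have int: "gg integrable_on {a..b}" by (rule integrable_continuous_real[OF gg_cont])
  have eq: "Phi x = integral {a..x} gg - integral {a..0} gg" if "x \<in> {a<..<b}" for x
  proof (cases "x \<ge> 0")
    case True
    have "gg integrable_on {a..x}" using that by (intro integrable_on_subinterval[OF int]) auto
    then have "integral {a..0} gg + integral {0..x} gg = integral {a..x} gg"
      using True that ab by (intro Henstock_Kurzweil_Integration.integral_combine) auto
    moreover have "integral {x..0} gg = 0"
      using True by (cases "x = 0") auto
    ultimately show ?thesis unfolding Phi_def by simp
  next
    case False
    have "gg integrable_on {a..0}" using ab by (intro integrable_on_subinterval[OF int]) auto
    then have "integral {a..x} gg + integral {x..0} gg = integral {a..0} gg"
      using False that ab by (intro Henstock_Kurzweil_Integration.integral_combine) auto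
    moreover have "integral {0..x} gg = 0"
      using False by simp
    ultimately show ?thesis unfolding Phi_def by simp
  qed
  have "((\<lambda>x. integral {a..x} gg) has_real_derivative gg t) (at t within {a..b})"
    using ab by (intro integral_has_real_derivative gg_cont) auto
  then have "((\<lambda>x. integral {a..x} gg) has_real_derivative gg t) (at t)"
    using at_within_Icc_at[of a t b] ab by simp
  then have "((\<lambda>x. integral {a..x} gg - integral {a..0} gg) has_real_derivative gg t) (at t)"
    by (auto intro!: derivative_eq_intros)
  then show ?thesis
    by (rule has_field_derivative_transform_within_open[where S="{a<..<b}"]) (use ab eq in auto)
qed

lemma Phi_cont: "isCont Phi x"
  using Phi_deriv DERIV_isCont by blast

lemma Phi_0: "Phi 0 = 0" by (simp add: Phi_def)

lemma Phi_mono: "x < y \<Longrightarrow> Phi x < Phi y"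
  by (rule DERIV_pos_imp_increasing) (use Phi_deriv gg_bounds in auto)

lemma Phi_inj: "Phi x = Phi y \<Longrightarrow> x = y"
  by (metis Phi_mono less_irrefl linorder_neqE_linordered_idom)

lemma Phi_lower: "x \<ge> 0 \<Longrightarrow> Phi x \<ge> x / sqrt 2"
proof -
  assume x: "x \<ge> 0"
  have "(\<lambda>x. Phi x - x / sqrt 2) 0 \<le> (\<lambda>x. Phi x - x / sqrt 2) x"
  proof (rule DERIV_nonneg_imp_nondecreasing[OF x])
    fix z
    have "((\<lambda>x. Phi x - x / sqrt 2) has_real_derivative gg z - 1 / sqrt 2) (at z)"
      by (rule DERIV_diff[OF Phi_deriv DERIV_cdivide[OF DERIV_ident]])
    moreover have "gg z - 1 / sqrt 2 \<ge> 0" using gg_bounds(2)[of z] by linarith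
    ultimately show "\<exists>y. ((\<lambda>x. Phi x - x / sqrt 2) has_real_derivative y) (at z) \<and> y \<ge> 0"
      by blast
  qed
  then show ?thesis by (simp add: Phi_0)
qed

lemma Phi_upper: "x \<le> 0 \<Longrightarrow> Phi x \<le> x / sqrt 2"
proof -
  assume x: "x \<le> 0"
  have "(\<lambda>x. Phi x - x / sqrt 2) x \<le> (\<lambda>x. Phi x - x / sqrt 2) 0"
  proof (rule DERIV_nonneg_imp_nondecreasing[OF x])
    fix z
    have "((\<lambda>x. Phi x - x / sqrt 2) has_real_derivative gg z - 1 / sqrt 2) (at z)"
      by (rule DERIV_diff[OF Phi_deriv DERIV_cdivide[OF DERIV_ident]])
    moreover have "gg z - 1 / sqrt 2 \<ge> 0" using gg_bounds(2)[of z] by linarith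
    ultimately show "\<exists>y. ((\<lambda>x. Phi x - x / sqrt 2) has_real_derivative y) (at z) \<and> y \<ge> 0"
      by blast
  qed
  then show ?thesis by (simp add: Phi_0)
qed

lemma Phi_surj: "\<exists>x. Phi x = y"
proof -
  define B where "B = sqrt 2 * \<bar>y\<bar>"
  have s2: "sqrt 2 > 0" by simp
  have "Phi (-B) \<le> -B / sqrt 2" by (rule Phi_upper) (simp add: B_def)
  also have "-B / sqrt 2 = - \<bar>y\<bar>" using s2 by (simp add: B_def)
  finally have lo: "Phi (-B) \<le> y" by linarith
  have "Phi B \<ge> B / sqrt 2" by (rule Phi_lower) (simp add: B_def)
  moreover have "B / sqrt 2 = \<bar>y\<bar>" using s2 by (simp add: B_def)
  ultimately have hi: "y \<le> Phi B" by linarith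
  have "-B \<le> B" by (simp add: B_def)
  from IVT[OF lo hi this] Phi_cont show ?thesis by blast
qed

definition phi :: "real \<Rightarrow> real" where "phi y = (THE x. Phi x = y)"

lemma Phi_phi: "Phi (phi y) = y"
  unfolding phi_def by (rule theI') (use Phi_surj Phi_inj in blast)

lemma phi_Phi: "phi (Phi x) = x"
  using Phi_phi Phi_inj by blast

lemma phi_0: "phi 0 = 0"
  using phi_Phi[of 0] Phi_0 by simp

lemma phi_deriv: "(phi has_real_derivative sqrt (1 + (cos (phi y))^2)) (at y)"
proof -
  have p: "sqrt (1 + (cos (phi y))^2) > 0" by (intro real_sqrt_gt_zero add_pos_nonneg) auto
  have "isCont phi (Phi (phi y))"
    by (rule isCont_inverse_function[of 1]) (auto simp: phi_Phi Phi_cont)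
  then have c: "isCont phi y" by (simp add: Phi_phi)
  have "(phi has_real_derivative inverse (gg (phi y))) (at y)"
    by (rule DERIV_inverse_function[where a="y-1" and b="y+1"])
       (use Phi_deriv gg_bounds(1)[of "phi y"] Phi_phi c in auto)
  then show ?thesis using p by (simp add: gg_def)
qed



definition r0 :: "real \<Rightarrow> real" where "r0 l = cos (phi l)"
definition r0' :: "real \<Rightarrow> real" where "r0' l = - sin (phi l) * sqrt (1 + (cos (phi l))^2)"

lemma sol_r0: "sol r0 r0'"
  unfolding sol_def
proof (intro conjI allI)
  show "r0 0 = 1" by (simp add: r0_def phi_0)
  show "r0' 0 = 0" by (simp add: r0'_def phi_0)
  fix l
  show "(r0 has_real_derivative r0' l) (at l)"
    unfolding r0_def[abs_def] r0'_def
    by (auto intro!: derivative_eq_intros phi_deriv)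
  have p: "1 + (cos (phi l))^2 > 0" by (intro add_pos_nonneg) auto
  have "(r0' has_real_derivative
     (- (cos (phi l) * sqrt (1 + (cos (phi l))^2)) * sqrt (1 + (cos (phi l))^2) +
      - sin (phi l) * ((2 * cos (phi l) * (- sin (phi l) * sqrt (1 + (cos (phi l))^2))) / (2 * sqrt (1 + (cos (phi l))^2))))) (at l)"
    unfolding r0'_def[abs_def]
    by (rule derivative_eq_intros phi_deriv refl | use p in simp)+
  moreover have "(- (cos (phi l) * sqrt (1 + (cos (phi l))^2)) * sqrt (1 + (cos (phi l))^2) +
      - sin (phi l) * ((2 * cos (phi l) * (- sin (phi l) * sqrt (1 + (cos (phi l))^2))) / (2 * sqrt (1 + (cos (phi l))^2))))
      = -2 * r0 l ^ 3"
  proof -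
    have s: "sqrt (1 + (cos (phi l))^2) > 0" using p by simp
    have ss: "sin (phi l) * sin (phi l) = 1 - cos (phi l) * cos (phi l)"
      using sin_squared_eq[of "phi l"] by (simp add: power2_eq_square)
    show ?thesis using s p unfolding r0_def
      by (simp add: field_simps power2_eq_square power3_eq_cube) (simp add: ss algebra_simps)
  qed
  ultimately show "(r0' has_real_derivative -2 * r0 l ^ 3) (at l)" by simp
qed

lemma cleaf2: "cleaf 2 = r0"
proof -
  have P: "(\<exists>r'. r 0 = 1 \<and> r' 0 = 0 \<and>
      (\<forall>l. (r has_real_derivative r' l) (at l)) \<and>
      (\<forall>l. (r' has_real_derivative (- real 2 * r l ^ (2 * 2 - 1))) (at l))) \<longleftrightarrow> (\<exists>r'. sol r r')" for r
    by (simp add: sol_def)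
  show ?thesis unfolding cleaf_def P
    by (rule the_equality) (use sol_r0 sol_unique in blast)+
qed



definition Mf :: "real \<Rightarrow> real" where "Mf c = 1 + 2*c^2 - c^4"
definition Rf :: "real \<Rightarrow> real" where "Rf c = (c^4 + 2*c^2 - 1) / Mf c"
definition hf :: "real \<Rightarrow> real" where "hf c = 4*c*(1+c^4) / (Mf c)^2"
definition hd :: "real \<Rightarrow> real" where
  "hd c = (4*(1+5*c^4) * Mf c - 8*c*(1+c^4)*(4*c-4*c^3)) / (Mf c)^3"

lemma Mf_pos: "\<bar>c\<bar> \<le> 1 \<Longrightarrow> Mf c > 0"
proof -
  assume "\<bar>c\<bar> \<le> 1"
  hence "c^2 \<le> 1" by (simp add: abs_square_le_1)
  moreover have "c^2 \<ge> 0" by simp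
  ultimately have "(1 - c^2)^2 \<le> 1" by (simp add: abs_square_le_1)
  moreover have "Mf c = 2 - (1 - c^2)^2" by (simp add: Mf_def power2_eq_square algebra_simps power4_eq_xxxx)
  ultimately show ?thesis by simp
qed

lemma Mf_deriv: "(Mf has_real_derivative (4*c - 4*c^3)) (at c)"
  unfolding Mf_def[abs_def]
  by (auto intro!: derivative_eq_intros simp: algebra_simps)

lemma Rf_deriv: "\<bar>c\<bar> \<le> 1 \<Longrightarrow> (Rf has_real_derivative 2 * hf c) (at c)"
proof -
  assume c: "\<bar>c\<bar> \<le> 1"
  have M: "Mf c \<noteq> 0" using Mf_pos[OF c] by simp
  have "(Rf has_real_derivative ((4*c^3 + 4*c) * Mf c - (c^4 + 2*c^2 - 1) * (4*c - 4*c^3)) / (Mf c * Mf c)) (at c)"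
    unfolding Rf_def[abs_def]
    by (rule derivative_eq_intros Mf_deriv refl | use M in \<open>simp add: algebra_simps\<close>)+
  moreover have "((4*c^3 + 4*c) * Mf c - (c^4 + 2*c^2 - 1) * (4*c - 4*c^3)) / (Mf c * Mf c) = 2 * hf c"
    using M unfolding hf_def by (simp add: field_simps) (unfold Mf_def, algebra)
  ultimately show ?thesis by simp
qed

lemma hf_deriv: "\<bar>c\<bar> \<le> 1 \<Longrightarrow> (hf has_real_derivative hd c) (at c)"
proof -
  assume c: "\<bar>c\<bar> \<le> 1"
  have M: "Mf c \<noteq> 0" using Mf_pos[OF c] by simp
  have "(hf has_real_derivative ((4*(1+c^4) + 4*c*(4*c^3)) * (Mf c)^2 - 4*c*(1+c^4) * (2 * Mf c * (4*c - 4*c^3))) / ((Mf c)^2 * (Mf c)^2)) (at c)"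
    unfolding hf_def[abs_def]
    by (rule derivative_eq_intros Mf_deriv refl | use M in \<open>simp add: algebra_simps\<close>)+
  moreover have "((4*(1+c^4) + 4*c*(4*c^3)) * (Mf c)^2 - 4*c*(1+c^4) * (2 * Mf c * (4*c - 4*c^3))) / ((Mf c)^2 * (Mf c)^2) = hd c"
    using M unfolding hd_def by (simp add: field_simps) (unfold Mf_def, algebra)
  ultimately show ?thesis by simp
qed

lemma key_identity: "\<bar>c\<bar> \<le> 1 \<Longrightarrow> (-2*c^3 * hf c + (1 - c^4) * hd c) / 2 = -2 * (Rf c)^3"
proof -
  assume c: "\<bar>c\<bar> \<le> 1"
  have M: "Mf c \<noteq> 0" using Mf_pos[OF c] by simp
  show ?thesis using M unfolding hf_def hd_def Rf_def
    by (simp add: field_simps) (unfold Mf_def, algebra)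
qed



definition F :: "real \<Rightarrow> real" where "F u = Rf (r0 (u/2))"
definition F' :: "real \<Rightarrow> real" where "F' u = r0' (u/2) * hf (r0 (u/2))"

lemma sol_F: "sol F F'"
proof -
  have d1: "\<And>x. (r0 has_real_derivative r0' x) (at x)" and d2: "\<And>x. (r0' has_real_derivative (-2 * r0 x ^ 3)) (at x)"
    using sol_r0 unfolding sol_def by auto
  have bd: "\<And>x. \<bar>r0 x\<bar> \<le> 1" using sol_bound[OF sol_r0] by blast
  have half: "\<And>u. ((\<lambda>u::real. u / 2) has_real_derivative 1 / 2) (at u)"
    by (rule DERIV_cdivide[OF DERIV_ident])
  have i1: "((\<lambda>u. r0 (u/2)) has_real_derivative r0' (u/2) * (1/2)) (at u)" for u
    by (rule DERIV_chain2[OF d1 half])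
  have i2: "((\<lambda>u. r0' (u/2)) has_real_derivative (-2 * r0 (u/2) ^ 3) * (1/2)) (at u)" for u
    by (rule DERIV_chain2[OF d2 half])
  show ?thesis unfolding sol_def
  proof (intro conjI allI)
    show "F 0 = 1" using sol_r0 by (simp add: sol_def F_def Rf_def Mf_def)
    show "F' 0 = 0" using sol_r0 by (simp add: sol_def F'_def)
    fix u
    have "(F has_real_derivative 2 * hf (r0 (u/2)) * (r0' (u/2) * (1/2))) (at u)"
      unfolding F_def[abs_def] by (rule DERIV_chain2[OF Rf_deriv[OF bd] i1])
    then show "(F has_real_derivative F' u) (at u)" by (simp add: F'_def mult.commute)
    have "(F' has_real_derivative (-2 * r0 (u/2) ^ 3) * (1/2) * hf (r0 (u/2)) +
             hd (r0 (u/2)) * (r0' (u/2) * (1/2)) * r0' (u/2)) (at u)"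
      unfolding F'_def[abs_def] by (rule DERIV_mult[OF i2 DERIV_chain2[OF hf_deriv[OF bd] i1]])
    moreover have "(-2 * r0 (u/2) ^ 3) * (1/2) * hf (r0 (u/2)) +
             hd (r0 (u/2)) * (r0' (u/2) * (1/2)) * r0' (u/2) = -2 * F u ^ 3"
    proof -
      let ?c = "r0 (u/2)" and ?s = "r0' (u/2)"
      have e: "?s^2 = 1 - ?c^4" using sol_energy[OF sol_r0, of "u/2"] by linarith
      have "(-2 * ?c ^ 3) * (1/2) * hf ?c + hd ?c * (?s * (1/2)) * ?s
            = (-2*?c^3 * hf ?c + ?s^2 * hd ?c) / 2" by (simp add: power2_eq_square algebra_simps)
      also have "\<dots> = (-2*?c^3 * hf ?c + (1 - ?c^4) * hd ?c) / 2" by (simp only: e)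
      also have "\<dots> = -2 * (Rf ?c)^3" by (rule key_identity[OF bd])
      finally show ?thesis by (simp add: F_def)
    qed
    ultimately show "(F' has_real_derivative -2 * F u ^ 3) (at u)" by simp
  qed
qed

lemma doubling: "r0 l = Rf (r0 (l/2))"
proof -
  have "r0 = F" by (rule sol_unique[OF sol_r0 sol_F])
  then have "r0 l = F l" by (rule fun_cong)
  then show ?thesis unfolding F_def .
qed

theorem mainTheorem13:
  fixes l :: real
  assumes "cleaf 2 l \<noteq> -1"
  shows "(cleaf 2 (l / 2))\<^sup>2 =
    (-1 + cleaf 2 l + sqrt 2 * sqrt (1 + (cleaf 2 l)\<^sup>2)) / (1 + cleaf 2 l)"
proof -
  define c where "c = r0 l"
  define x where "x = r0 (l/2)"
  define y where "y = x^2"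
  have bd: "\<And>x. \<bar>r0 x\<bar> \<le> 1" using sol_bound[OF sol_r0] by blast
  have c1: "1 + c > 0" using assms bd[of l] unfolding c_def cleaf2 by auto
  have M: "Mf x > 0" using bd[of "l/2"] Mf_pos unfolding x_def by blast
  have "c = (x^4 + 2*x^2 - 1) / Mf x" using doubling[of l] unfolding c_def x_def Rf_def by simp
  then have "c * Mf x = x^4 + 2*x^2 - 1" using M by (simp add: field_simps)
  then have q: "(1+c) * y^2 + 2*(1-c)*y - (1+c) = 0"
    unfolding y_def Mf_def by (simp add: algebra_simps power4_eq_xxxx power2_eq_square) 
  define z where "z = (1+c) * y"
  have "(z + (1-c))^2 = 2 + 2*c^2"
  proof -
    have "(z + (1-c))^2 = (1+c) * ((1+c) * y^2 + 2*(1-c)*y - (1+c)) + (1-c)^2 + (1+c)^2"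
      unfolding z_def by (simp add: power2_eq_square algebra_simps)
    also have "\<dots> = 2 + 2*c^2" using q by (simp add: power2_eq_square algebra_simps)
    finally show ?thesis .
  qed
  moreover have "z + (1-c) \<ge> 0"
  proof -
    have "z \<ge> 0" using c1 unfolding z_def y_def by simp
    moreover have "c \<le> 1" using abs_le_D1[OF bd[of l]] unfolding c_def .
    ultimately show ?thesis by linarith
  qed
  ultimately have w: "sqrt (2 + 2*c^2) = z + (1-c)" by (intro real_sqrt_unique) auto
  have "sqrt 2 * sqrt (1 + c^2) = sqrt (2 + 2*c^2)" by (simp add: real_sqrt_mult[symmetric] algebra_simps)
  then have "sqrt 2 * sqrt (1 + c^2) = z + 1 - c" using w by simp
  then have "(-1 + c + sqrt 2 * sqrt (1 + c^2)) / (1 + c) = y"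
    using c1 unfolding z_def by (simp add: field_simps)
  then show ?thesis unfolding cleaf2 c_def y_def x_def by simp
qed

end
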